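(* Let $m,s,d,k$ be positive integers and $q$ a prime power such that $d\le m(q-km^{s-1}-2)$ and $k\le\lfloor q/m\rfloor^{s-1}$. Then the multiplicity code $\mathcal{C}(m,d,s,q)$ is a $k$-batch code $[q^s,n,k]_Q^B$, where $n=\binom{d+s}{s}/\binom{s+m-1}{s}$ and $Q=q^{\binom{s+m-1}{s}}$.
   Context: For $\boldsymbol{i}=(i_1,\dots,i_s)$ a vector of nonnegative integers, $wt(\boldsymbol{i})=\sum_j i_j$. For $P\in\mathbb{F}_q[x_1,\dots,x_s]$, the $\boldsymbol{i}$-th Hasse derivative $P^{(\boldsymbol{i})}(\boldsymbol{x})$ is the coefficient of $\boldsymbol{z}^{\boldsymbol{i}}$ in $P(\boldsymbol{x}+\boldsymbol{z})$. Let $\Sigma=\mathbb{F}_q^{\binom{s+m-1}{s}}$ and $P^{(<m)}(\boldsymbol{w})=(P^{(\boldsymbol{i})}(\boldsymbol{w}))_{wt(\boldsymbol{i})<m}\in\Sigma$. The multiplicity code $\mathcal{C}(m,d,s,q)$ is the $\mathbb{F}_q$-linear code of length $q^s$ over the alphabet $\Sigma$ (of size $Q$), coordinates indexed by $\mathbb{F}_q^s$, consisting of $(P^{(<m)}(\boldsymbol{w}))_{\boldsymbol{w}\in\mathbb{F}_q^s}$ for all $P$ of total degree at most $d$, taken in systematic form so that it encodes $n=\log_Q|\mathcal{C}|$ information symbols. An $[N,n,k]_Q^B$ code ($k$-batch code) is a code of length $N$ over an alphabet of size $Q$ encoding $n$ information symbols $x_1,\dots,x_n$ such that for every multiset $\{i_1,\dots,i_k\}$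 of indices there exist $k$ mutually disjoint sets $R_1,\dots,R_k$ of coordinates such that, for each $j$, $x_{i_j}$ is a function of the codeword symbols in $R_j$. *)

theory Defs
  imports Complex_Main "HOL-Library.FuncSet"
begin

text \<open>Polynomials in s variables x_0,...,x_{s-1} over a field are represented by their
coefficient functions: a polynomial is a map from exponent vectors (nat => nat, zero at
positions >= s) to coefficients.  Points of F_q^s are maps nat => 'a vanishing at
positions >= s.\<close>

definition expvecs :: "nat \<Rightarrow> (nat \<Rightarrow> nat) set" where
  "expvecs s = {e. \<forall>j\<ge>s. e j = 0}"

definition wt :: "nat \<Rightarrow> (nat \<Rightarrow> nat) \<Rightarrow> nat" where
  "wt s e = (\<Sum>j<s. e j)"

definition monoms :: "nat \<Rightarrow> nat \<Rightarrow> (nat \<Rightarrow> nat) set" where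
  "monoms s d = {e \<in> expvecs s. wt s e \<le> d}"

definition mindices :: "nat \<Rightarrow> nat \<Rightarrow> (nat \<Rightarrow> nat) set" where
  "mindices s m = {i \<in> expvecs s. wt s i < m}"

definition polys :: "nat \<Rightarrow> nat \<Rightarrow> ((nat \<Rightarrow> nat) \<Rightarrow> 'a::field) set" where
  "polys s d = {P. \<forall>e. P e \<noteq> 0 \<longrightarrow> e \<in> monoms s d}"

definition points :: "nat \<Rightarrow> (nat \<Rightarrow> 'a::field) set" where
  "points s = {w. \<forall>j\<ge>s. w j = 0}"

text \<open>The i-th Hasse derivative of P (of degree at most d) at w: the coefficient of z^i in
P(w+z).  By the binomial theorem, the coefficient of z_j^(i_j) in (w_j + z_j)^(e_j) is
(e_j choose i_j) w_j^(e_j - i_j) (which is 0 when i_j > e_j).\<close>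
definition hasse :: "nat \<Rightarrow> nat \<Rightarrow> ((nat \<Rightarrow> nat) \<Rightarrow> 'a::field) \<Rightarrow> (nat \<Rightarrow> nat) \<Rightarrow> (nat \<Rightarrow> 'a) \<Rightarrow> 'a" where
  "hasse s d P i w = (\<Sum>e\<in>monoms s d. P e * (\<Prod>j<s. of_nat (e j choose i j) * w j ^ (e j - i j)))"

text \<open>The alphabet Sigma = F_q^{binom(s+m-1,s)}: vectors indexed by mindices s m.\<close>
definition alphabet :: "nat \<Rightarrow> nat \<Rightarrow> ((nat \<Rightarrow> nat) \<Rightarrow> 'a::field) set" where
  "alphabet s m = {\<sigma>. \<forall>i. i \<notin> mindices s m \<longrightarrow> \<sigma> i = 0}"

definition mult_symbol :: "nat \<Rightarrow> nat \<Rightarrow> nat \<Rightarrow> ((nat \<Rightarrow> nat) \<Rightarrow> 'a::field) \<Rightarrow> (nat \<Rightarrow> 'a) \<Rightarrow> ((nat \<Rightarrow> nat) \<Rightarrow> 'a)" where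
  "mult_symbol s m d P w = (\<lambda>i. if i \<in> mindices s m then hasse s d P i w else 0)"

text \<open>The codeword of P: coordinates indexed by points s (value outside irrelevant, set to 0).\<close>
definition mult_codeword :: "nat \<Rightarrow> nat \<Rightarrow> nat \<Rightarrow> ((nat \<Rightarrow> nat) \<Rightarrow> 'a::field) \<Rightarrow> (nat \<Rightarrow> 'a) \<Rightarrow> ((nat \<Rightarrow> nat) \<Rightarrow> 'a)" where
  "mult_codeword s m d P = (\<lambda>w. if w \<in> points s then mult_symbol s m d P w else (\<lambda>_. 0))"

text \<open>The multiplicity code C(m,d,s,q), q = CARD('a).\<close>
definition mult_code :: "nat \<Rightarrow> nat \<Rightarrow> nat \<Rightarrow> ((nat \<Rightarrow> 'a::field) \<Rightarrow> ((nat \<Rightarrow> nat) \<Rightarrow> 'a)) set" where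
  "mult_code m d s = mult_codeword s m d ` polys s d"

text \<open>k-batch property of a code C (set of words indexed by the coordinate set I):
for every multiset (here: list of length k) of coordinates there are k pairwise disjoint
sets of coordinates R_j such that the symbol at the j-th requested coordinate is a function
of the codeword symbols in R_j.  (In systematic form the information symbols are
codeword coordinates.)\<close>
definition is_batch_code :: "('i \<Rightarrow> 'b) set \<Rightarrow> 'i set \<Rightarrow> nat \<Rightarrow> bool" where
  "is_batch_code C I k \<longleftrightarrow>
     (\<forall>xs. length xs = k \<and> set xs \<subseteq> I \<longrightarrow>
        (\<exists>R :: nat \<Rightarrow> 'i set. \<exists>g :: nat \<Rightarrow> ('i \<Rightarrow> 'b) \<Rightarrow> 'b.
           (\<forall>j<k. R j \<subseteq> I) \<and>
           (\<forall>j<k. \<forall>j'<k. j \<noteq> j' \<longrightarrow> R j \<inter> R j' = {}) \<and>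
           (\<forall>j<k. \<forall>c\<in>C. c (xs ! j) = g j (restrict c (R j)))))"

end

theory Submission
  imports Defs "HOL-Computational_Algebra.Polynomial"
begin

lemma card_supp_funs:
  assumes "finite J"
  shows "card {f :: 'i \<Rightarrow> 'b::{finite,zero}. \<forall>x. x \<notin> J \<longrightarrow> f x = 0} = card (UNIV::'b set) ^ card J"
proof -
  have "bij_betw (\<lambda>f. restrict f J) {f :: 'i \<Rightarrow> 'b. \<forall>x. x \<notin> J \<longrightarrow> f x = 0} (PiE J (\<lambda>_. UNIV))"
    by (rule bij_betw_byWitness[where f'="\<lambda>g x. if x \<in> J then g x else 0"])
       (auto simp: restrict_def PiE_def extensional_def fun_eq_iff)
  then have "card {f :: 'i \<Rightarrow> 'b. \<forall>x. x \<notin> J \<longrightarrow> f x = 0} = card (PiE J (\<lambda>_. (UNIV::'b set)))"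
    by (rule bij_betw_same_card)
  also have "\<dots> = card (UNIV::'b set) ^ card J" using assms by (simp add: card_PiE)
  finally show ?thesis .
qed

lemma wt_Suc: "wt (Suc s) e = wt s e + e s"
  by (simp add: wt_def)

lemma wt_upd: "wt s (i(s:=x)) = wt s i"
  by (simp add: wt_def)

lemma expvecs_Suc_upd: "i \<in> expvecs s \<Longrightarrow> i(s:=x) \<in> expvecs (Suc s)"
  by (auto simp: expvecs_def)

lemma card_wt_le:
  "finite {i \<in> expvecs s. wt s i \<le> r} \<and> card {i \<in> expvecs s. wt s i \<le> r} = (r + s) choose s"
proof (induction s arbitrary: r)
  case 0
  have "{i \<in> expvecs 0. wt 0 i \<le> r} = {\<lambda>_. 0}"
    by (auto simp: expvecs_def wt_def)
  then show ?case by simp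
next
  case (Suc s)
  let ?A = "{i \<in> expvecs (Suc s). wt (Suc s) i \<le> r}"
  let ?S = "Sigma {..r} (\<lambda>x. {i \<in> expvecs s. wt s i \<le> r - x})"
  have bij: "bij_betw (\<lambda>i. (i s, i(s:=0))) ?A ?S"
    by (rule bij_betw_byWitness[where f'="\<lambda>(x,i). i(s:=x)"])
       (auto simp: expvecs_def wt_Suc wt_upd)
  have fS: "finite ?S" using Suc by auto
  have "card ?A = card ?S" using bij by (rule bij_betw_same_card)
  also have "\<dots> = (\<Sum>x\<le>r. (r - x + s) choose s)"
    using Suc by (subst card_SigmaI) auto
  also have "\<dots> = (\<Sum>y\<le>r. (s + y) choose y)"
  proof -
    have "(\<Sum>x\<le>r. (r - x + s) choose s) = (\<Sum>x\<le>r. (s + (r - x)) choose (r - x))"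
      by (intro sum.cong refl) (metis add.commute binomial_symmetric le_add2 add_diff_cancel_right')
    also have "\<dots> = (\<Sum>y\<le>r. (s + y) choose y)"
      by (rule sum.reindex_bij_witness[where i="\<lambda>y. r - y" and j="\<lambda>x. r - x"]) auto
    finally show ?thesis .
  qed
  also have "\<dots> = Suc (s + r) choose r" by (rule sum_choose_lower)
  also have "\<dots> = (r + Suc s) choose Suc s"
    by (metis add.commute add_Suc_right binomial_symmetric le_add2 add_diff_cancel_left')
  finally show ?case using bij fS bij_betw_finite by blast
qed

lemma coeff_lin_pow_gen:
  fixes c :: "'b::comm_ring_1"
  shows "coeff ([:c,v:]^n) r = of_nat (n choose r) * v^r * c^(n-r)"
proof (cases "r \<le> n")
  case True then show ?thesis by (rule coeff_linear_poly_power)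
next
  case False
  have "degree ([:c,v:]^n) \<le> 1 * n"
    by (rule order.trans[OF degree_power_le]) (simp add: degree_pCons_le)
  then have "coeff ([:c,v:]^n) r = 0" using False by (intro coeff_eq_0) simp
  then show ?thesis using False by (simp add: binomial_eq_0)
qed

lemma coeff_lin_pow:
  fixes b :: "'b::comm_ring_1"
  shows "coeff ([:b,1:]^n) r = of_nat (n choose r) * b^(n-r)"
  by (simp add: coeff_lin_pow_gen)

lemma lin_pow_expand:
  fixes c :: "'b::comm_ring_1"
  shows "[:c,v:]^n = (\<Sum>x\<le>n. monom (of_nat (n choose x) * v^x * c^(n-x)) x)"
proof (rule poly_eqI)
  fix r
  show "coeff ([:c,v:]^n) r = coeff (\<Sum>x\<le>n. monom (of_nat (n choose x) * v^x * c^(n-x)) x) r"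
    by (cases "r \<le> n") (auto simp: coeff_sum coeff_monom coeff_lin_pow_gen binomial_eq_0)
qed

lemma pcompose_monom1: "pcompose (monom 1 n) q = q^n"
  by (induction n) (simp_all add: monom_Suc pcompose_pCons pcompose_1 monom_0)

lemma dvd_from_taylor:
  fixes p :: "'b::comm_ring_1 poly"
  assumes "\<forall>r<\<mu>. coeff (pcompose p [:b,1:]) r = 0"
  shows "[:-b,1:]^\<mu> dvd p"
proof -
  have "monom 1 \<mu> dvd pcompose p [:b,1:]" using assms by (simp add: monom_1_dvd_iff')
  then obtain h where h: "pcompose p [:b,1:] = monom 1 \<mu> * h" by (auto simp: dvd_def)
  have "p = pcompose (pcompose p [:b,1:]) [:-b,1:]"
    by (simp flip: pcompose_assoc add: pcompose_pCons)
  also have "\<dots> = [:-b,1:]^\<mu> * pcompose h [:-b,1:]"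
    by (simp add: h pcompose_mult pcompose_monom1)
  finally show ?thesis by (metis dvd_triv_left)
qed

lemma roots_mult_bound:
  fixes p :: "'b::idom poly"
  assumes "p \<noteq> 0" "finite B" "\<forall>b\<in>B. [:-b,1:]^\<mu> dvd p"
  shows "\<mu> * card B \<le> degree p"
  using assms(2,1,3)
proof (induction B arbitrary: p rule: finite_induct)
  case empty then show ?case by simp
next
  case (insert b B)
  then obtain p1 where p1: "p = [:-b,1:]^\<mu> * p1" by (auto simp: dvd_def)
  with insert have p1z: "p1 \<noteq> 0" by auto
  have "\<forall>b'\<in>B. [:-b',1:]^\<mu> dvd p1"
  proof
    fix b' assume b': "b' \<in> B"
    then have bb: "b' \<noteq> b" using insert by auto
    have "\<mu> \<le> order b' p" using insert b' by (simp add: order_divides)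
    also have "order b' p = order b' ([:-b,1:]^\<mu>) + order b' p1"
      using p1 p1z by (simp add: order_mult)
    also have "order b' ([:-b,1:]^\<mu>) = 0"
      using bb by (intro order_0I) simp
    finally show "[:-b',1:]^\<mu> dvd p1" by (simp add: order_divides)
  qed
  then have "\<mu> * card B \<le> degree p1" using insert p1z by blast
  moreover have "degree p = \<mu> + degree p1"
    using p1 p1z by (simp add: degree_mult_eq degree_linear_power)
  ultimately show ?case using insert by simp
qed

lemma vanish_bound:
  fixes p :: "'b::idom poly"
  assumes "p \<noteq> 0" "finite B" "\<forall>b\<in>B. \<forall>r<\<mu>. coeff (pcompose p [:b,1:]) r = 0"
  shows "\<mu> * card B \<le> degree p"
  using assms by (intro roots_mult_bound) (auto intro: dvd_from_taylor)

lemma coeff_pcompose_monom: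
  fixes b :: "'b::comm_ring_1"
  shows "coeff (pcompose (monom c n) [:b,1:]) r = c * of_nat (n choose r) * b^(n-r)"
proof -
  have "monom c n = smult c (monom 1 n)" by (simp add: smult_monom)
  then show ?thesis by (simp add: pcompose_smult pcompose_monom1 coeff_lin_pow)
qed

definition hterm :: "nat \<Rightarrow> (nat \<Rightarrow> nat) \<Rightarrow> (nat \<Rightarrow> nat) \<Rightarrow> (nat \<Rightarrow> 'a::field) \<Rightarrow> 'a" where
  "hterm s e i w = (\<Prod>j<s. of_nat (e j choose i j) * w j ^ (e j - i j))"

lemma hasse_hterm: "hasse s d P i w = (\<Sum>e\<in>monoms s d. P e * hterm s e i w)"
  by (simp add: hasse_def hterm_def)

lemma hterm_Suc: "hterm (Suc s) e (i(s:=r)) (w(s:=b)) = hterm s e i w * (of_nat (e s choose r) * b ^ (e s - r))"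
  by (simp add: hterm_def)

lemma hterm_upd_e: "hterm s (e(s:=t)) i w = hterm s e i w"
  by (simp add: hterm_def)


lemma finite_monoms: "finite (monoms s d)"
proof -
  have "monoms s d \<subseteq> (\<lambda>f j. if j < s then f j else 0) ` ({..<s} \<rightarrow>\<^sub>E {..d})"
  proof
    fix e assume e: "e \<in> monoms s d"
    have le: "e j \<le> d" if "j < s" for j
    proof -
      have "e j \<le> wt s e" unfolding wt_def using that by (intro member_le_sum) auto
      then show ?thesis using e by (auto simp: monoms_def)
    qed
    have eq: "e = (\<lambda>f j. if j < s then f j else 0) (restrict e {..<s})"
      using e by (auto simp: monoms_def expvecs_def fun_eq_iff)
    have mem: "restrict e {..<s} \<in> {..<s} \<rightarrow>\<^sub>E {..d}" using le by (simp add: restrict_PiE_iff)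
    show "e \<in> (\<lambda>f j. if j < s then f j else 0) ` ({..<s} \<rightarrow>\<^sub>E {..d})"
      by (rule image_eqI[where f="\<lambda>f j. if j < s then f j else 0", OF eq mem])
  qed
  then show ?thesis by (rule finite_subset) (auto intro: finite_PiE)
qed

lemma polys_zero_out: "P \<in> polys s d \<Longrightarrow> e \<notin> monoms s d \<Longrightarrow> P e = 0"
  by (auto simp: polys_def)

lemma base_zero:
  fixes P :: "(nat \<Rightarrow> nat) \<Rightarrow> 'a::field"
  assumes "P \<in> polys 0 d" "0 < m" "\<forall>w\<in>points 0. \<forall>i\<in>mindices 0 m. hasse 0 d P i w = 0"
  shows "P = (\<lambda>_. 0)"
proof -
  have M: "monoms 0 d = {\<lambda>_. 0}" by (auto simp: monoms_def expvecs_def wt_def)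
  have "(\<lambda>_. 0::'a) \<in> points 0" by (simp add: points_def)
  moreover have "(\<lambda>_. 0::nat) \<in> mindices 0 m" using assms(2) by (simp add: mindices_def expvecs_def wt_def)
  ultimately have "hasse 0 d P (\<lambda>_. 0) (\<lambda>_. 0) = 0" using assms(3) by blast
  then have "P (\<lambda>_. 0) = 0" by (simp add: hasse_def M)
  note PZ = this
  have OTH: "P e = 0" if "e \<noteq> (\<lambda>_. 0)" for e
    using polys_zero_out[OF assms(1)] that M by auto
  show ?thesis
  proof
    fix e show "P e = 0" by (cases "e = (\<lambda>_. 0)") (simp_all add: PZ OTH)
  qed
qed

lemma inj_aux:
  fixes P :: "(nat \<Rightarrow> nat) \<Rightarrow> 'a::{finite,field}"
  assumes "P \<in> polys s d" "d < m * card (UNIV::'a set)"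
    "\<forall>w\<in>points s. \<forall>i\<in>mindices s m. hasse s d P i w = 0"
  shows "P = (\<lambda>_. 0)"
  using assms
proof (induction s arbitrary: d m P)
  case 0
  then show ?case using base_zero[of P d m] by (cases m) auto
next
  case (Suc s)
  let ?q = "card (UNIV::'a set)"
  have qpos: "?q > 0" by (simp add: card_gt_0_iff)
  show ?case
  proof (rule ccontr)
    assume nz: "P \<noteq> (\<lambda>_. 0)"
    let ?E = "{e. P e \<noteq> 0}"
    have Esub: "?E \<subseteq> monoms (Suc s) d" using Suc.prems(1) by (auto simp: polys_def)
    have finE: "finite ?E" using Esub finite_monoms finite_subset by blast
    have neE: "?E \<noteq> {}" using nz by auto
    define t where "t = Max ((\<lambda>e. e s) ` ?E)"
    have tmax: "e s \<le> t" if "P e \<noteq> 0" for e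
      unfolding t_def using finE that by (intro Max_ge) auto
    have "t \<in> (\<lambda>e. e s) ` ?E" unfolding t_def using finE neE by (intro Max_in) auto
    then obtain e0 where e0: "P e0 \<noteq> 0" "e0 s = t" by auto
    have e0m: "e0 \<in> monoms (Suc s) d" using e0 Esub by auto
    have td: "t \<le> d" using e0m e0(2) by (auto simp: monoms_def wt_Suc)
    define Pt where "Pt = (\<lambda>e'. if e' \<in> expvecs s then P (e'(s:=t)) else 0)"
    have Ptpoly: "Pt \<in> polys s (d - t)"
    proof -
      have "e' \<in> monoms s (d - t)" if "Pt e' \<noteq> 0" for e'
      proof -
        have "e' \<in> expvecs s" "P (e'(s:=t)) \<noteq> 0" using that by (auto simp: Pt_def split: if_splits)
        then have "e'(s:=t) \<in> monoms (Suc s) d" using Esub by auto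
        then show ?thesis using \<open>e' \<in> expvecs s\<close>
          by (auto simp: monoms_def wt_Suc wt_upd)
      qed
      then show ?thesis by (auto simp: polys_def)
    qed
    have Ptnz: "Pt \<noteq> (\<lambda>_. 0)"
    proof -
      have "e0(s:=0) \<in> expvecs s" using e0m by (auto simp: monoms_def expvecs_def)
      moreover have "(e0(s:=0))(s:=t) = e0" using e0 by auto
      ultimately have "Pt (e0(s:=0)) \<noteq> 0" using e0 by (simp add: Pt_def)
      then show ?thesis by (auto simp: fun_eq_iff)
    qed
    define m' where "m' = m - t div ?q"
    have tdq: "t div ?q * ?q \<le> t" by (rule div_times_less_eq_dividend)
    have dlt: "d - t < m' * ?q"
    proof -
      have "m' * ?q = m * ?q - t div ?q * ?q" by (simp add: m'_def diff_mult_distrib)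
      then show ?thesis using Suc.prems(2) td tdq by linarith
    qed
    have van: "\<forall>w\<in>points s. \<forall>i\<in>mindices s m'. hasse s (d - t) Pt i w = 0"
    proof (intro ballI, rule ccontr)
      fix a' i' assume a': "a' \<in> points s" and i': "i' \<in> mindices s m'"
        and hnz: "hasse s (d - t) Pt i' a' \<noteq> 0"
      define g where "g = (\<Sum>e\<in>monoms (Suc s) d. monom (P e * hterm s e i' a') (e s))"
      have cg: "coeff g t = hasse s (d - t) Pt i' a'"
      proof -
        have "coeff g t = (\<Sum>e\<in>monoms (Suc s) d. if e s = t then P e * hterm s e i' a' else 0)"
          by (simp add: g_def coeff_sum coeff_monom)
        also have "\<dots> = (\<Sum>e\<in>{e\<in>monoms (Suc s) d. e s = t}. P e * hterm s e i' a')"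
          by (simp add: sum.inter_filter[OF finite_monoms])
        also have "\<dots> = (\<Sum>e'\<in>monoms s (d - t). Pt e' * hterm s e' i' a')"
        proof (rule sum.reindex_bij_witness[where i="\<lambda>e'. e'(s:=t)" and j="\<lambda>e. e(s:=0)"])
          fix e assume e: "e \<in> {e \<in> monoms (Suc s) d. e s = t}"
          then show "(e(s:=0))(s:=t) = e" "e(s:=0) \<in> monoms s (d - t)"
            by (auto simp: monoms_def expvecs_def wt_Suc wt_upd)
          have "e(s:=0) \<in> expvecs s" using e by (auto simp: monoms_def expvecs_def)
          then show "Pt (e(s:=0)) * hterm s (e(s:=0)) i' a' = P e * hterm s e i' a'"
            using e by (simp add: Pt_def hterm_def fun_upd_idem)
        next
          fix e' assume e': "e' \<in> monoms s (d - t)"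
          then show "(e'(s:=t))(s:=0) = e'" by (auto simp: monoms_def expvecs_def fun_eq_iff)
          show "e'(s:=t) \<in> {e \<in> monoms (Suc s) d. e s = t}"
            using e' td by (auto simp: monoms_def expvecs_def wt_Suc wt_upd)
        qed
        also have "\<dots> = hasse s (d - t) Pt i' a'" by (simp add: hasse_hterm)
        finally show ?thesis .
      qed
      then have gnz: "g \<noteq> 0" using hnz by auto
      have degg: "degree g \<le> t"
        unfolding g_def
      proof (rule degree_sum_le[OF finite_monoms])
        fix e assume "e \<in> monoms (Suc s) d"
        show "degree (monom (P e * hterm s e i' a') (e s)) \<le> t"
          by (cases "P e = 0") (auto intro: order.trans[OF degree_monom_le] tmax)
      qed
      have wti: "wt s i' < m'" using i' by (simp add: mindices_def)
      have vb: "\<forall>b\<in>UNIV. \<forall>r<m - wt s i'. coeff (pcompose g [:b,1:]) r = 0"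
      proof (intro ballI allI impI)
        fix b :: 'a and r assume r: "r < m - wt s i'"
        have "coeff (pcompose g [:b,1:]) r
            = (\<Sum>e\<in>monoms (Suc s) d. P e * hterm (Suc s) e (i'(s:=r)) (a'(s:=b)))"
          by (simp add: g_def pcompose_sum coeff_sum coeff_pcompose_monom hterm_Suc mult_ac)
        also have "\<dots> = hasse (Suc s) d P (i'(s:=r)) (a'(s:=b))" by (simp add: hasse_hterm)
        also have "\<dots> = 0"
        proof -
          have "a'(s:=b) \<in> points (Suc s)" using a' by (auto simp: points_def)
          moreover have "i'(s:=r) \<in> mindices (Suc s) m"
            using i' r by (auto simp: mindices_def expvecs_def wt_Suc wt_upd)
          ultimately show ?thesis using Suc.prems(3) by blast
        qed
        finally show "coeff (pcompose g [:b,1:]) r = 0" .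
      qed
      have "(m - wt s i') * ?q \<le> degree g"
        using vanish_bound[OF gnz _ vb] by simp
      then have "(m - wt s i') * ?q \<le> t" using degg by linarith
      moreover have "t div ?q + 1 \<le> m - wt s i'" using wti by (simp add: m'_def)
      ultimately have "(t div ?q + 1) * ?q \<le> t"
        by (meson le_trans mult_le_mono1)
      moreover have "t < (t div ?q + 1) * ?q"
      proof -
        have "t = t div ?q * ?q + t mod ?q" by simp
        moreover have "t mod ?q < ?q" using qpos by simp
        ultimately show ?thesis by (simp only: distrib_right)
      qed
      ultimately show False by linarith
    qed
    have "Pt = (\<lambda>_. 0)" using Suc.IH[OF Ptpoly dlt van] .
    then show False using Ptnz by simp
  qed
qed

definition box :: "nat \<Rightarrow> (nat \<Rightarrow> nat) \<Rightarrow> (nat \<Rightarrow> nat) set" where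
  "box s e = {i. (\<forall>j<s. i j \<le> e j) \<and> (\<forall>j\<ge>s. i j = 0)}"

lemma box_Suc: "box (Suc s) e = (\<lambda>(i,x). i(s:=x)) ` (box s e \<times> {..e s})"
proof (intro equalityI subsetI)
  fix i assume i: "i \<in> box (Suc s) e"
  then have "(i(s:=0), i s) \<in> box s e \<times> {..e s}" by (auto simp: box_def)
  moreover have "i = (\<lambda>(i,x). i(s:=x)) (i(s:=0), i s)" by simp
  ultimately show "i \<in> (\<lambda>(i,x). i(s:=x)) ` (box s e \<times> {..e s})" by (rule rev_image_eqI)
next
  fix i assume "i \<in> (\<lambda>(i,x). i(s:=x)) ` (box s e \<times> {..e s})"
  then show "i \<in> box (Suc s) e" by (auto simp: box_def)
qed

lemma box_inj: "inj_on (\<lambda>(i,x). i(s:=x)) (box s e \<times> {..e s})"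
  by (auto simp: inj_on_def box_def fun_eq_iff)

lemma finite_box: "finite (box s e)"
proof (induction s)
  case 0
  have "box 0 e = {\<lambda>_. 0}" by (auto simp: box_def)
  then show ?case by simp
next
  case (Suc s) then show ?case by (simp add: box_Suc)
qed

lemma prod_sum_box:
  fixes f :: "nat \<Rightarrow> nat \<Rightarrow> 'b::comm_semiring_1"
  shows "(\<Prod>j<s. \<Sum>x\<le>e j. f j x) = (\<Sum>i\<in>box s e. \<Prod>j<s. f j (i j))"
proof (induction s)
  case 0
  have "box 0 e = {\<lambda>_. 0}" by (auto simp: box_def)
  then show ?case by simp
next
  case (Suc s)
  have "(\<Prod>j<Suc s. \<Sum>x\<le>e j. f j x) = (\<Sum>i\<in>box s e. \<Prod>j<s. f j (i j)) * (\<Sum>x\<le>e s. f s x)"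
    by (simp add: Suc)
  also have "\<dots> = (\<Sum>(i,x)\<in>box s e \<times> {..e s}. (\<Prod>j<s. f j (i j)) * f s x)"
    by (subst sum_product) (simp add: sum.cartesian_product[symmetric])
  also have "\<dots> = (\<Sum>(i,x)\<in>box s e \<times> {..e s}. \<Prod>j<Suc s. f j ((i(s:=x)) j))"
    by (intro sum.cong refl) auto
  also have "\<dots> = (\<Sum>i\<in>box (Suc s) e. \<Prod>j<Suc s. f j (i j))"
    unfolding box_Suc by (subst sum.reindex[OF box_inj]) (simp add: case_prod_unfold)
  finally show ?case .
qed

lemma prod_monom: "(\<Prod>j<(s::nat). monom (a j) (n j)) = monom (\<Prod>j<s. a j) (\<Sum>j<s. n j)"
  by (induction s) (simp_all add: mult_monom monom_eq_1)

definition vpow :: "nat \<Rightarrow> (nat \<Rightarrow> 'a::field) \<Rightarrow> (nat \<Rightarrow> nat) \<Rightarrow> 'a" where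
  "vpow s v i = (\<Prod>j<s. v j ^ i j)"

definition Iw :: "nat \<Rightarrow> nat \<Rightarrow> (nat \<Rightarrow> nat) set" where
  "Iw s r = {i \<in> expvecs s. wt s i = r}"

lemma finite_Iw: "finite (Iw s r)"
  using card_wt_le[of s r] by (rule conjE) (erule finite_subset[rotated], auto simp: Iw_def)

lemma key_mono:
  fixes c v :: "nat \<Rightarrow> 'a::field"
  shows "coeff (\<Prod>j<s. [:c j, v j:]^(e j)) r = (\<Sum>i\<in>Iw s r. vpow s v i * hterm s e i c)"
proof -
  have "(\<Prod>j<s. [:c j, v j:]^(e j))
      = (\<Prod>j<s. \<Sum>x\<le>e j. monom (of_nat (e j choose x) * v j^x * c j^(e j-x)) x)"
    by (simp add: lin_pow_expand)
  also have "\<dots> = (\<Sum>i\<in>box s e. monom (\<Prod>j<s. of_nat (e j choose i j) * v j^i j * c j^(e j-i j)) (wt s i))"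
    by (simp add: prod_sum_box prod_monom wt_def)
  finally have "coeff (\<Prod>j<s. [:c j, v j:]^(e j)) r
     = (\<Sum>i\<in>box s e. if wt s i = r then (\<Prod>j<s. of_nat (e j choose i j) * v j^i j * c j^(e j-i j)) else 0)"
    by (simp add: coeff_sum coeff_monom eq_commute)
  also have "\<dots> = (\<Sum>i\<in>{i\<in>box s e. wt s i = r}. \<Prod>j<s. of_nat (e j choose i j) * v j^i j * c j^(e j-i j))"
    by (simp add: sum.inter_filter[OF finite_box])
  also have "\<dots> = (\<Sum>i\<in>Iw s r. \<Prod>j<s. of_nat (e j choose i j) * v j^i j * c j^(e j-i j))"
  proof (rule sum.mono_neutral_left[OF finite_Iw])
    show "{i \<in> box s e. wt s i = r} \<subseteq> Iw s r" by (auto simp: box_def Iw_def expvecs_def)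
    show "\<forall>i\<in>Iw s r - {i \<in> box s e. wt s i = r}. (\<Prod>j<s. of_nat (e j choose i j) * v j^i j * c j^(e j-i j)) = 0"
    proof
      fix i assume "i \<in> Iw s r - {i \<in> box s e. wt s i = r}"
      then obtain j where "j < s" "e j < i j" by (auto simp: box_def Iw_def expvecs_def not_le)
      then show "(\<Prod>j<s. of_nat (e j choose i j) * v j^i j * c j^(e j-i j)) = 0"
        by (intro prod_zero bexI[where x=j]) (auto simp: binomial_eq_0)
    qed
  qed
  also have "\<dots> = (\<Sum>i\<in>Iw s r. vpow s v i * hterm s e i c)"
    by (simp add: vpow_def hterm_def prod.distrib mult_ac)
  finally show ?thesis .
qed

lemma key_poly:
  fixes c v :: "nat \<Rightarrow> 'a::field"
  shows "coeff (\<Sum>e\<in>monoms s d. smult (P e) (\<Prod>j<s. [:c j, v j:]^(e j))) r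
       = (\<Sum>i\<in>Iw s r. vpow s v i * hasse s d P i c)"
  by (simp add: coeff_sum key_mono hasse_hterm sum_distrib_left sum_distrib_right mult_ac
      sum.swap[where A="monoms s d"])

lemma pcompose_power: "pcompose (p ^ n) q = (pcompose p q) ^ n"
  by (induction n) (simp_all add: pcompose_1 pcompose_mult)

lemma pcompose_line:
  fixes w v :: "nat \<Rightarrow> 'a::field"
  shows "pcompose (\<Prod>j<s. [:w j, v j:]^(e j)) [:t0,1:] = (\<Prod>j<s. [:w j + t0 * v j, v j:]^(e j))"
  by (simp add: pcompose_prod pcompose_power pcompose_pCons algebra_simps)

lemma line_recover:
  fixes P :: "(nat \<Rightarrow> nat) \<Rightarrow> 'a::field"
  assumes "P \<in> polys s d" "finite T" "d < m * card T"
    "\<forall>t\<in>T. \<forall>i\<in>mindices s m. hasse s d P i (\<lambda>j. w j + t * v j) = 0"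
  shows "(\<Sum>i\<in>Iw s r. vpow s v i * hasse s d P i w) = 0"
proof -
  define Q where "Q = (\<Sum>e\<in>monoms s d. smult (P e) (\<Prod>j<s. [:w j, v j:]^(e j)))"
  have degQ: "degree Q \<le> d"
    unfolding Q_def
  proof (rule degree_sum_le[OF finite_monoms])
    fix e assume e: "e \<in> monoms s d"
    have "degree (smult (P e) (\<Prod>j<s. [:w j, v j:]^(e j))) \<le> degree (\<Prod>j<s. [:w j, v j:]^(e j))"
      by (rule degree_smult_le)
    also have "\<dots> \<le> (\<Sum>j<s. degree ([:w j, v j:]^(e j)))"
      by (rule order.trans[OF degree_prod_sum_le]) simp_all
    also have "\<dots> \<le> (\<Sum>j<s. e j)"
    proof (rule sum_mono)
      fix j
      have "degree ([:w j, v j:]^(e j)) \<le> degree [:w j, v j:] * e j" by (rule degree_power_le)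
      also have "\<dots> \<le> 1 * e j" by (intro mult_le_mono1) (simp add: degree_pCons_le)
      finally show "degree ([:w j, v j:]^(e j)) \<le> e j" by simp
    qed
    also have "\<dots> \<le> d" using e by (simp add: monoms_def wt_def)
    finally show "degree (smult (P e) (\<Prod>j<s. [:w j, v j:]^(e j))) \<le> d" .
  qed
  have Q0: "Q = 0"
  proof (rule ccontr)
    assume nz: "Q \<noteq> 0"
    have "\<forall>b\<in>T. \<forall>r<m. coeff (pcompose Q [:b,1:]) r = 0"
    proof (intro ballI allI impI)
      fix b r assume b: "b \<in> T" and r: "r < m"
      have "pcompose Q [:b,1:] = (\<Sum>e\<in>monoms s d. smult (P e) (\<Prod>j<s. [:w j + b * v j, v j:]^(e j)))"
        by (simp add: Q_def pcompose_sum pcompose_smult pcompose_line)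
      then have "coeff (pcompose Q [:b,1:]) r = (\<Sum>i\<in>Iw s r. vpow s v i * hasse s d P i (\<lambda>j. w j + b * v j))"
        by (simp add: key_poly)
      also have "\<dots> = 0"
        using assms(4) b r by (intro sum.neutral) (auto simp: Iw_def mindices_def)
      finally show "coeff (pcompose Q [:b,1:]) r = 0" .
    qed
    then have "m * card T \<le> degree Q" by (rule vanish_bound[OF nz assms(2)])
    then show False using degQ assms(3) by linarith
  qed
  have "coeff Q r = (\<Sum>i\<in>Iw s r. vpow s v i * hasse s d P i w)"
    unfolding Q_def by (rule key_poly)
  then show ?thesis using Q0 by simp
qed

definition dir :: "nat \<Rightarrow> nat \<Rightarrow> 'a::field \<Rightarrow> nat \<Rightarrow> 'a" where
  "dir s m a = (\<lambda>j. if j = 0 then 1 else if j < s then a ^ (m ^ (j - 1)) else 0)"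

definition Nk :: "nat \<Rightarrow> nat \<Rightarrow> (nat \<Rightarrow> nat) \<Rightarrow> nat" where
  "Nk s m i = (\<Sum>j<s - 1. i (Suc j) * m ^ j)"

lemma vpow_dir:
  assumes "1 \<le> s"
  shows "vpow s (dir s m a) i = a ^ Nk s m i"
proof -
  obtain s' where s: "s = Suc s'" using assms by (cases s) auto
  have "vpow s (dir s m a) i = (\<Prod>j<s'. (a ^ (m ^ j)) ^ i (Suc j))"
    unfolding vpow_def s prod.lessThan_Suc_shift by (simp add: dir_def)
  also have "\<dots> = (\<Prod>j<s'. a ^ (i (Suc j) * m ^ j))"
    by (simp add: power_mult[symmetric] mult.commute)
  also have "\<dots> = a ^ Nk s m i" by (simp add: Nk_def s power_sum)
  finally show ?thesis .
qed

lemma base_m_less: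
  assumes "\<forall>j<n. x j < (m::nat)"
  shows "(\<Sum>j<n. x j * m ^ j) < m ^ n"
  using assms
proof (induction n)
  case 0 then show ?case by simp
next
  case (Suc n)
  have "(\<Sum>j<Suc n. x j * m ^ j) = (\<Sum>j<n. x j * m ^ j) + x n * m ^ n" by simp
  also have "\<dots> < m ^ n + x n * m ^ n" using Suc by simp
  also have "\<dots> = (x n + 1) * m ^ n" by simp
  also have "\<dots> \<le> m * m ^ n" using Suc.prems[rule_format, of n] by (intro mult_le_mono1) simp
  finally show ?case by simp
qed

lemma base_m_unique:
  assumes "\<forall>j<n. x j < (m::nat)" "\<forall>j<n. y j < m"
    "(\<Sum>j<n. x j * m ^ j) = (\<Sum>j<n. y j * m ^ j)"
  shows "\<forall>j<n. x j = y j"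
  using assms
proof (induction n arbitrary: x y)
  case 0 then show ?case by simp
next
  case (Suc n)
  have split: "(\<Sum>j<Suc n. z j * m ^ j) = z 0 + m * (\<Sum>j<n. z (Suc j) * m ^ j)" for z :: "nat \<Rightarrow> nat"
    unfolding sum.lessThan_Suc_shift by (simp add: sum_distrib_left mult_ac)
  have x0: "x 0 < m" and y0: "y 0 < m" using Suc.prems(1,2) by auto
  define X where "X = (\<Sum>j<n. x (Suc j) * m ^ j)"
  define Y where "Y = (\<Sum>j<n. y (Suc j) * m ^ j)"
  have eq: "x 0 + m * X = y 0 + m * Y"
    using Suc.prems(3) split[of x] split[of y] by (simp add: X_def Y_def)
  have "(x 0 + m * X) mod m = x 0" using x0 by simp
  moreover have "(y 0 + m * Y) mod m = y 0" using y0 by simp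
  ultimately have xy0: "x 0 = y 0" using eq by metis
  then have "m * X = m * Y" using eq by simp
  then have XY: "X = Y" using x0 by simp
  have p1: "\<forall>j<n. x (Suc j) < m" using Suc.prems(1) by simp
  have p2: "\<forall>j<n. y (Suc j) < m" using Suc.prems(2) by simp
  have rest: "\<forall>j<n. x (Suc j) = y (Suc j)"
    using Suc.IH[of "\<lambda>j. x (Suc j)" "\<lambda>j. y (Suc j)", OF p1 p2] XY by (simp add: X_def Y_def)
  show ?case
  proof (intro allI impI)
    fix j assume j: "j < Suc n"
    show "x j = y j"
    proof (cases j)
      case 0 then show ?thesis using xy0 by simp
    next
      case (Suc j') then show ?thesis using rest j by simp
    qed
  qed
qed

lemma wt_shift: "wt (Suc s') i = i 0 + (\<Sum>j<s'. i (Suc j))"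
  unfolding wt_def sum.lessThan_Suc_shift by simp

lemma Nk_inj:
  assumes "1 \<le> s" "i \<in> Iw s r" "i' \<in> Iw s r" "r < m" "Nk s m i = Nk s m i'"
  shows "i = i'"
proof -
  obtain s' where s: "s = Suc s'" using assms by (cases s) auto
  have ent: "z j < m" if "z \<in> Iw s r" "j < s" for z j
  proof -
    have "z j \<le> wt s z" unfolding wt_def using that(2) by (intro member_le_sum) auto
    then show ?thesis using that assms(4) by (auto simp: Iw_def)
  qed
  have "\<forall>j<s'. i (Suc j) = i' (Suc j)"
    using assms(5) ent[OF assms(2)] ent[OF assms(3)]
    by (intro base_m_unique[where m=m]) (auto simp: Nk_def s)
  moreover have "i 0 = i' 0"
  proof -
    have "(\<Sum>j<s'. i (Suc j)) = (\<Sum>j<s'. i' (Suc j))" using calculation by simp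
    then show ?thesis using assms(2,3) by (simp add: Iw_def s wt_shift)
  qed
  moreover have "i j = 0" "i' j = 0" if "j \<ge> s" for j
    using assms(2,3) that by (auto simp: Iw_def expvecs_def)
  ultimately show ?thesis
  proof (intro ext)
    fix j
    assume A: "\<forall>j<s'. i (Suc j) = i' (Suc j)" "i 0 = i' 0"
      and B: "\<And>j. s \<le> j \<Longrightarrow> i j = 0" "\<And>j. s \<le> j \<Longrightarrow> i' j = 0"
    show "i j = i' j"
    proof (cases j)
      case 0 then show ?thesis using A by simp
    next
      case (Suc j')
      then show ?thesis using A B s by (cases "j' < s'") auto
    qed
  qed
qed

lemma recover_dirs:
  fixes h :: "(nat \<Rightarrow> nat) \<Rightarrow> 'a::field"
  assumes "1 \<le> s" "finite A" "card A = m ^ (s - 1)"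
    "\<forall>a\<in>A. \<forall>r. (\<Sum>i\<in>Iw s r. vpow s (dir s m a) i * h i) = 0"
  shows "\<forall>i\<in>mindices s m. h i = 0"
proof
  fix i0 assume i0: "i0 \<in> mindices s m"
  define r where "r = wt s i0"
  have rm: "r < m" using i0 by (simp add: r_def mindices_def)
  have i0I: "i0 \<in> Iw s r" using i0 by (simp add: r_def mindices_def Iw_def)
  define p where "p = (\<Sum>i\<in>Iw s r. monom (h i) (Nk s m i))"
  have ent: "z j < m" if "z \<in> Iw s r" "j < s" for z j
  proof -
    have "z j \<le> wt s z" unfolding wt_def using that(2) by (intro member_le_sum) auto
    then show ?thesis using that rm by (auto simp: Iw_def)
  qed
  have Nlt: "Nk s m i < m ^ (s - 1)" if "i \<in> Iw s r" for i
    unfolding Nk_def using ent[OF that] by (intro base_m_less) auto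
  have degp: "degree p < m ^ (s - 1)"
  proof -
    have "degree p \<le> m ^ (s - 1) - 1"
      unfolding p_def
    proof (rule degree_sum_le[OF finite_Iw])
      fix i assume "i \<in> Iw s r"
      then show "degree (monom (h i) (Nk s m i)) \<le> m ^ (s - 1) - 1"
        using Nlt by (intro order.trans[OF degree_monom_le]) fastforce
    qed
    moreover have "m ^ (s - 1) > 0" using rm by simp
    ultimately show ?thesis by linarith
  qed
  have roots: "A \<subseteq> {x. poly p x = 0}"
  proof
    fix a assume a: "a \<in> A"
    have "poly p a = (\<Sum>i\<in>Iw s r. vpow s (dir s m a) i * h i)"
      by (simp add: p_def poly_sum poly_monom vpow_dir[OF assms(1)] mult_ac)
    then show "a \<in> {x. poly p x = 0}" using assms(4) a by simp
  qed
  have p0: "p = 0"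
  proof (rule ccontr)
    assume nz: "p \<noteq> 0"
    have "card A \<le> card {x. poly p x = 0}"
      using roots poly_roots_finite[OF nz] by (rule card_mono[rotated])
    also have "\<dots> \<le> degree p" by (rule card_poly_roots_bound[OF nz])
    finally show False using degp assms(3) by simp
  qed
  have "coeff p (Nk s m i0) = (\<Sum>i\<in>Iw s r. if Nk s m i0 = Nk s m i then h i else 0)"
    unfolding p_def coeff_sum coeff_monom by (intro sum.cong refl) auto
  also have "\<dots> = (\<Sum>i\<in>Iw s r. if i = i0 then h i else 0)"
  proof (rule sum.cong[OF refl])
    fix i assume "i \<in> Iw s r"
    then show "(if Nk s m i0 = Nk s m i then h i else 0) = (if i = i0 then h i else 0)"
      using Nk_inj[OF assms(1) _ i0I rm, of i] by auto
  qed
  also have "\<dots> = h i0" using i0I finite_Iw by simp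
  finally show "h i0 = 0" using p0 by simp
qed

lemma hasse_diff: "hasse s d (\<lambda>e. P e - P' e) i w = hasse s d P i w - hasse s d P' i w"
  by (simp add: hasse_def sum_subtractf algebra_simps)

lemma polys_diff: "P \<in> polys s d \<Longrightarrow> P' \<in> polys s d \<Longrightarrow> (\<lambda>e. P e - P' e) \<in> polys s d"
proof -
  assume a: "P \<in> polys s d" "P' \<in> polys s d"
  have "e \<in> monoms s d" if "P e - P' e \<noteq> 0" for e
  proof (rule ccontr)
    assume "e \<notin> monoms s d"
    then have "P e = 0" "P' e = 0" using a by (auto simp: polys_def)
    then show False using that by simp
  qed
  then show ?thesis by (simp add: polys_def)
qed

lemma codeword_eq_at:
  assumes "u \<in> points s" "mult_codeword s m d P u = mult_codeword s m d P' u" "i \<in> mindices s m"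
  shows "hasse s d P i u = hasse s d P' i u"
proof -
  have "mult_symbol s m d P u i = mult_symbol s m d P' u i"
    using assms by (simp add: mult_codeword_def)
  then show ?thesis using assms(3) by (simp add: mult_symbol_def)
qed

lemma batch_det:
  fixes xs :: "(nat \<Rightarrow> 'a::field) list" and R :: "nat \<Rightarrow> (nat \<Rightarrow> 'a) set"
  assumes "\<forall>j<k. R j \<subseteq> points s" "\<forall>j<k. \<forall>j'<k. j \<noteq> j' \<longrightarrow> R j \<inter> R j' = {}"
    "\<forall>j<k. \<forall>P\<in>polys s d. (\<forall>u\<in>R j. \<forall>i\<in>mindices s m. hasse s d P i u = 0)
        \<longrightarrow> (\<forall>i\<in>mindices s m. hasse s d P i (xs!j) = 0)"
    "\<forall>j<k. xs ! j \<in> points s"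
  shows "\<exists>R :: nat \<Rightarrow> (nat \<Rightarrow> 'a) set. \<exists>g :: nat \<Rightarrow> ((nat \<Rightarrow> 'a) \<Rightarrow> ((nat \<Rightarrow> nat) \<Rightarrow> 'a)) \<Rightarrow> ((nat \<Rightarrow> nat) \<Rightarrow> 'a).
           (\<forall>j<k. R j \<subseteq> points s) \<and>
           (\<forall>j<k. \<forall>j'<k. j \<noteq> j' \<longrightarrow> R j \<inter> R j' = {}) \<and>
           (\<forall>j<k. \<forall>c\<in>mult_code m d s. c (xs ! j) = g j (restrict c (R j)))"
proof -
  let ?C = "mult_code m d s :: ((nat \<Rightarrow> 'a) \<Rightarrow> ((nat \<Rightarrow> nat) \<Rightarrow> 'a)) set"
  define g where "g = (\<lambda>j f. SOME y. \<exists>c\<in>?C. restrict c (R j) = f \<and> y = c (xs ! j))"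
  have G: "\<forall>j<k. \<forall>c\<in>?C. c (xs ! j) = g j (restrict c (R j))"
  proof (intro allI impI ballI)
    fix j c assume j: "j < k" and c: "c \<in> ?C"
    have ex: "\<exists>y. \<exists>c'\<in>?C. restrict c' (R j) = restrict c (R j) \<and> y = c' (xs ! j)"
      by (rule exI[of _ "c (xs ! j)"], rule bexI[OF _ c]) simp
    have "\<exists>c'\<in>?C. restrict c' (R j) = restrict c (R j) \<and> g j (restrict c (R j)) = c' (xs ! j)"
      unfolding g_def by (rule someI_ex[OF ex])
    then obtain c' where c': "c' \<in> ?C" "restrict c' (R j) = restrict c (R j)"
      and gdef: "g j (restrict c (R j)) = c' (xs ! j)" by blast
    obtain P where P: "P \<in> polys s d" "c = mult_codeword s m d P" using c by (auto simp: mult_code_def)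
    obtain P' where P': "P' \<in> polys s d" "c' = mult_codeword s m d P'" using c' by (auto simp: mult_code_def)
    let ?D = "\<lambda>e. P e - P' e"
    have "\<forall>u\<in>R j. \<forall>i\<in>mindices s m. hasse s d ?D i u = 0"
    proof (intro ballI)
      fix u i assume u: "u \<in> R j" and i: "i \<in> mindices s m"
      have up: "u \<in> points s" using assms(1) j u by auto
      have "c u = c' u" using c'(2) u by (metis restrict_apply')
      then have "mult_codeword s m d P u = mult_codeword s m d P' u" using P(2) P'(2) by simp
      then have "hasse s d P i u = hasse s d P' i u"
        by (rule codeword_eq_at[OF up _ i])
      then show "hasse s d ?D i u = 0" by (simp add: hasse_diff)
    qed
    then have D0: "\<forall>i\<in>mindices s m. hasse s d ?D i (xs ! j) = 0"
      using assms(3)[rule_format, OF j polys_diff[OF P(1) P'(1)]] by simp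
    have "mult_symbol s m d P (xs ! j) = mult_symbol s m d P' (xs ! j)"
    proof
      fix i show "mult_symbol s m d P (xs ! j) i = mult_symbol s m d P' (xs ! j) i"
        using D0 by (simp add: mult_symbol_def hasse_diff)
    qed
    then have "c (xs ! j) = c' (xs ! j)" using P P' by (simp add: mult_codeword_def)
    then show "c (xs ! j) = g j (restrict c (R j))" using gdef by simp
  qed
  show ?thesis by (intro exI[of _ R] exI[of _ g] conjI assms(1) assms(2) G)
qed

lemma blocks:
  fixes K k :: nat
  assumes "k * K \<le> card (UNIV::'a::finite set)"
  shows "\<exists>A :: nat \<Rightarrow> 'a set. (\<forall>j<k. card (A j) = K) \<and> (\<forall>j<k. \<forall>j'<k. j \<noteq> j' \<longrightarrow> A j \<inter> A j' = {})"
proof -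
  obtain h :: "nat \<Rightarrow> 'a" where h: "bij_betw h {0..<card (UNIV::'a set)} UNIV"
    using ex_bij_betw_nat_finite[of "UNIV::'a set"] by auto
  have inj: "inj_on h {0..<card (UNIV::'a set)}" using h by (simp add: bij_betw_def)
  define A where "A = (\<lambda>j. h ` {j*K..<j*K+K})"
  have sub: "{j*K..<j*K+K} \<subseteq> {0..<card (UNIV::'a set)}" if "j < k" for j
  proof -
    have "j*K + K = Suc j * K" by simp
    also have "\<dots> \<le> k * K" using that by (intro mult_le_mono1) simp
    finally show ?thesis using assms by auto
  qed
  have "card (A j) = K" if "j < k" for j
    unfolding A_def using inj_on_subset[OF inj sub[OF that]] by (simp add: card_image)
  moreover have "A j \<inter> A j' = {}" if "j < k" "j' < k" "j \<noteq> j'" for j j'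
  proof (rule ccontr)
    assume "A j \<inter> A j' \<noteq> {}"
    then obtain x where "x \<in> A j" "x \<in> A j'" by blast
    then obtain a b where a: "a \<in> {j*K..<j*K+K}" and b: "b \<in> {j'*K..<j'*K+K}" and hab: "h a = h b"
      unfolding A_def by (metis imageE)
    have "a = b" using inj hab sub[OF that(1)] sub[OF that(2)] a b by (auto dest: inj_onD)
    have "False" if "j1 < j2" "x \<in> {j1*K..<j1*K+K}" "x \<in> {j2*K..<j2*K+K}" for j1 j2 x
    proof -
      have "j1*K + K = Suc j1 * K" by simp
      also have "\<dots> \<le> j2 * K" using that(1) by (intro mult_le_mono1) simp
      finally show False using that by auto
    qed
    then show False using a b \<open>a = b\<close> that(3) by (cases "j < j'") (auto simp: not_less_iff_gr_or_eq)
  qed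
  ultimately show ?thesis by blast
qed

lemma line_sets:
  fixes xs :: "(nat \<Rightarrow> 'a::{finite,field}) list" and A :: "nat \<Rightarrow> 'a set"
  assumes s2: "2 \<le> s" and len: "length xs = k" and pts: "set xs \<subseteq> points s" and m0: "0 < m"
    and cardA: "\<forall>j<k. card (A j) = m ^ (s - 1)"
    and disjA: "\<forall>j<k. \<forall>j'<k. j \<noteq> j' \<longrightarrow> A j \<inter> A j' = {}"
    and dle: "int d \<le> int m * (int (card (UNIV::'a set)) - int k * int m ^ (s - 1) - 2)"
  shows "\<exists>R. (\<forall>j<k. R j \<subseteq> points s) \<and> (\<forall>j<k. \<forall>j'<k. j \<noteq> j' \<longrightarrow> R j \<inter> R j' = {}) \<and>
     (\<forall>j<k. \<forall>P\<in>polys s d. (\<forall>u\<in>R j. \<forall>i\<in>mindices s m. hasse s d P i u = 0)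
        \<longrightarrow> (\<forall>i\<in>mindices s m. hasse s d P i (xs ! j) = 0))"
proof -
  let ?q = "card (UNIV::'a set)"
  define K where "K = m ^ (s - 1)"
  define lpt where "lpt j a t = (\<lambda>l. (xs ! j) l + t * dir s m a l)" for j a t
  define L where "L j = {lpt j a t | a t. a \<in> A j}" for j
  define R where "R j = {lpt j a t | a t. a \<in> A j \<and> t \<noteq> 0 \<and> (\<forall>j'<k. j' \<noteq> j \<longrightarrow> lpt j a t \<notin> L j')}" for j
  have xsp: "xs ! j \<in> points s" if "j < k" for j using pts len that nth_mem by blast
  have lptp: "lpt j a t \<in> points s" if "j < k" for j a t
    using xsp[OF that] s2 by (auto simp: points_def lpt_def dir_def)
  have Rsub: "\<forall>j<k. R j \<subseteq> points s" using lptp by (auto simp: R_def)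
  have Rdisj: "\<forall>j<k. \<forall>j'<k. j \<noteq> j' \<longrightarrow> R j \<inter> R j' = {}"
  proof (intro allI impI)
    fix j j' assume j: "j < k" and j': "j' < k" and ne: "j \<noteq> j'"
    show "R j \<inter> R j' = {}"
    proof (rule ccontr)
      assume "R j \<inter> R j' \<noteq> {}"
      then obtain u where u1: "u \<in> R j" and u2: "u \<in> R j'" by blast
      from u2 obtain a' t' where "u = lpt j' a' t'" "a' \<in> A j'" by (auto simp: R_def)
      then have "u \<in> L j'" by (auto simp: L_def)
      moreover from u1 obtain a t where "u = lpt j a t" "\<forall>j''<k. j'' \<noteq> j \<longrightarrow> lpt j a t \<notin> L j''"
        by (auto simp: R_def)
      ultimately show False using j' ne by auto
    qed
  qed
  have dir0: "dir s m a 0 = 1" for a :: 'a by (simp add: dir_def)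
  have dir1: "dir s m a (Suc 0) = a" for a :: 'a using s2 by (simp add: dir_def)
  have S1: "card {t. lpt j a t \<in> {lpt j' a' t' | t'. True}} \<le> 1"
    if "a \<in> A j" "a' \<in> A j'" "j < k" "j' < k" "j \<noteq> j'" for j j' a a'
  proof -
    have aa: "a \<noteq> a'" using disjA that by blast
    have "\<forall>t1\<in>{t. lpt j a t \<in> {lpt j' a' t' | t'. True}}. \<forall>t2\<in>{t. lpt j a t \<in> {lpt j' a' t' | t'. True}}. t1 = t2"
    proof (intro ballI, rule ccontr)
      fix t1 t2 assume t1: "t1 \<in> {t. lpt j a t \<in> {lpt j' a' t' | t'. True}}"
        and t2: "t2 \<in> {t. lpt j a t \<in> {lpt j' a' t' | t'. True}}" and ne: "t1 \<noteq> t2"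
      from t1 obtain t1' where e1: "lpt j a t1 = lpt j' a' t1'" by auto
      from t2 obtain t2' where e2: "lpt j a t2 = lpt j' a' t2'" by auto
      have h1: "(xs ! j) 0 + t1 = (xs ! j') 0 + t1'" using fun_cong[OF e1, of 0] by (simp add: lpt_def dir0)
      have h2: "(xs ! j) 0 + t2 = (xs ! j') 0 + t2'" using fun_cong[OF e2, of 0] by (simp add: lpt_def dir0)
      have h3: "(xs ! j) 1 + t1 * a = (xs ! j') 1 + t1' * a'" using fun_cong[OF e1, of 1] by (simp add: lpt_def dir1)
      have h4: "(xs ! j) 1 + t2 * a = (xs ! j') 1 + t2' * a'" using fun_cong[OF e2, of 1] by (simp add: lpt_def dir1)
      have "(t1 - t2) * (a - a') = 0" using h1 h2 h3 h4 by algebra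
      then show False using ne aa by simp
    qed
    then show ?thesis using card_le_Suc0_iff_eq[of "{t. lpt j a t \<in> {lpt j' a' t' | t'. True}}"] by simp
  qed
  have det: "\<forall>i\<in>mindices s m. hasse s d P i (xs ! j) = 0"
    if j: "j < k" and P: "P \<in> polys s d" and van: "\<forall>u\<in>R j. \<forall>i\<in>mindices s m. hasse s d P i u = 0" for j P
  proof -
    have line: "\<forall>r. (\<Sum>i\<in>Iw s r. vpow s (dir s m a) i * hasse s d P i (xs ! j)) = 0" if a: "a \<in> A j" for a
    proof
      fix r
      define T where "T = {t. t \<noteq> 0 \<and> (\<forall>j'<k. j' \<noteq> j \<longrightarrow> lpt j a t \<notin> L j')}"
      have vT: "\<forall>t\<in>T. \<forall>i\<in>mindices s m. hasse s d P i (\<lambda>l. (xs ! j) l + t * dir s m a l) = 0"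
      proof (intro ballI)
        fix t i assume t: "t \<in> T" and i: "i \<in> mindices s m"
        have "lpt j a t \<in> R j" using t a by (auto simp: R_def T_def)
        then show "hasse s d P i (\<lambda>l. (xs ! j) l + t * dir s m a l) = 0"
          using van i by (simp add: lpt_def)
      qed
      define J where "J = {j'. j' < k \<and> j' \<noteq> j}"
      define S where "S j' a' = {t. lpt j a t \<in> {lpt j' a' t' | t'. True}}" for j' a'
      have bad: "UNIV - T \<subseteq> insert 0 (\<Union>j'\<in>J. \<Union>a'\<in>A j'. S j' a')"
        by (auto simp: T_def J_def S_def L_def)
      have cS: "card (S j' a') \<le> 1" if "j' \<in> J" "a' \<in> A j'" for j' a'
        using S1[of a j a' j'] a j that by (auto simp: S_def J_def)
      have cJ: "card J = k - 1"
      proof -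
        have "J = {..<k} - {j}" by (auto simp: J_def)
        then show ?thesis using j by simp
      qed
      have "card (\<Union>j'\<in>J. \<Union>a'\<in>A j'. S j' a') \<le> (\<Sum>j'\<in>J. card (\<Union>a'\<in>A j'. S j' a'))"
        by (rule card_UN_le) (simp add: J_def)
      also have "\<dots> \<le> (\<Sum>j'\<in>J. \<Sum>a'\<in>A j'. card (S j' a'))"
        by (intro sum_mono card_UN_le) simp
      also have "\<dots> \<le> (\<Sum>j'\<in>J. \<Sum>a'\<in>A j'. 1)"
        by (intro sum_mono) (use cS in auto)
      also have "\<dots> = (\<Sum>j'\<in>J. K)"
        using cardA by (intro sum.cong refl) (simp add: J_def K_def)
      also have "\<dots> = (k - 1) * K" using cJ by simp
      finally have cU: "card (\<Union>j'\<in>J. \<Union>a'\<in>A j'. S j' a') \<le> (k - 1) * K" .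
      have cB: "card (UNIV - T) \<le> 1 + (k - 1) * K"
      proof -
        have "card (UNIV - T) \<le> card (insert 0 (\<Union>j'\<in>J. \<Union>a'\<in>A j'. S j' a'))"
          by (rule card_mono[OF _ bad]) simp
        also have "\<dots> \<le> Suc (card (\<Union>j'\<in>J. \<Union>a'\<in>A j'. S j' a'))" by (rule card_insert_le_m1) simp_all
        finally show ?thesis using cU by simp
      qed
      have cT: "card T = ?q - card (UNIV - T)"
        using card_mono[of UNIV T] by (simp add: card_Diff_subset)
      have cBq: "card (UNIV - T) \<le> ?q" by (rule card_mono) simp_all
      have kK: "int ((k - 1) * K) = int k * int K - int K" using j by (simp add: of_nat_diff algebra_simps)
      have iT: "int (card T) \<ge> int ?q - 1 - (int k * int K - int K)"
        using cT cB cBq kK by linarith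
      have X0: "int d \<le> int m * (int ?q - int k * int K - 2)" using dle by (simp add: K_def)
      have "int m * (int ?q - int k * int K - 2) < int m * int (card T)"
        using iT m0 by (intro mult_strict_left_mono) auto
      then have "int d < int m * int (card T)" using X0 by linarith
      then have dT: "d < m * card T" by (metis of_nat_less_iff of_nat_mult)
      show "(\<Sum>i\<in>Iw s r. vpow s (dir s m a) i * hasse s d P i (xs ! j)) = 0"
        by (rule line_recover[OF P _ dT vT]) simp
    qed
    have r1: "1 \<le> s" using s2 by simp
    have r2: "finite (A j)" by simp
    have r3: "card (A j) = m ^ (s - 1)" using cardA j by simp
    have r4: "\<forall>a\<in>A j. \<forall>r. (\<Sum>i\<in>Iw s r. vpow s (dir s m a) i * hasse s d P i (xs ! j)) = 0"
      using line by blast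
    show ?thesis using recover_dirs[OF r1 r2 r3 r4] .
  qed
  have D: "\<forall>j<k. \<forall>P\<in>polys s d. (\<forall>u\<in>R j. \<forall>i\<in>mindices s m. hasse s d P i u = 0)
        \<longrightarrow> (\<forall>i\<in>mindices s m. hasse s d P i (xs ! j) = 0)"
  proof (intro allI impI ballI)
    fix j P i assume "j < k" "P \<in> polys s d" "\<forall>u\<in>R j. \<forall>i\<in>mindices s m. hasse s d P i u = 0"
      "i \<in> mindices s m"
    then show "hasse s d P i (xs ! j) = 0" using det by blast
  qed
  show ?thesis by (intro exI[of _ R] conjI Rsub Rdisj D)
qed

theorem lemma4:
  fixes m s d k :: nat
    and field_witness :: "'a::{finite,field} itself"
  assumes "m > 0" and "s > 0" and "d > 0" and "k > 0"
    and "int d \<le> int m * (int (card (UNIV :: 'a set)) - int k * int m ^ (s - 1) - 2)"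
    and "k \<le> (card (UNIV :: 'a set) div m) ^ (s - 1)"
  shows "card (points s :: (nat \<Rightarrow> 'a) set) = card (UNIV :: 'a set) ^ s
    \<and> card (alphabet s m :: ((nat \<Rightarrow> nat) \<Rightarrow> 'a) set) = card (UNIV :: 'a set) ^ ((s + m - 1) choose s)
    \<and> mult_code m d s \<subseteq> (points s :: (nat \<Rightarrow> 'a) set) \<rightarrow> alphabet s m
    \<and> real (card (mult_code m d s :: ((nat \<Rightarrow> 'a) \<Rightarrow> ((nat \<Rightarrow> nat) \<Rightarrow> 'a)) set))
        = real (card (UNIV :: 'a set) ^ ((s + m - 1) choose s))
            powr (real ((d + s) choose s) / real ((s + m - 1) choose s))
    \<and> is_batch_code (mult_code m d s :: ((nat \<Rightarrow> 'a) \<Rightarrow> ((nat \<Rightarrow> nat) \<Rightarrow> 'a)) set)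
        (points s) k"
proof -
  let ?q = "card (UNIV :: 'a set)"
  have qpos: "?q > 0" by (simp add: card_gt_0_iff)
  define X where "X = int ?q - int k * int m ^ (s - 1) - 2"
  have dX: "int d \<le> int m * X" using assms(5) by (simp add: X_def)
  have X1: "X \<ge> 1"
  proof (rule ccontr)
    assume "\<not> X \<ge> 1"
    then have "X \<le> 0" by simp
    then have "int m * X \<le> 0" using assms(1) by (simp add: mult_nonneg_nonpos)
    then show False using dX assms(3) by linarith
  qed
  have dmq: "d < m * ?q"
  proof -
    have "0 \<le> int k * int m ^ (s - 1)" by simp
    then have "X < int ?q" unfolding X_def by linarith
    then have "int m * X < int m * int ?q" using assms(1) by (intro mult_strict_left_mono) auto
    then have "int d < int (m * ?q)" using dX by simp
    then show ?thesis by linarith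
  qed
  have P1: "card (points s :: (nat \<Rightarrow> 'a) set) = ?q ^ s"
  proof -
    have "points s = {f :: nat \<Rightarrow> 'a. \<forall>x. x \<notin> {..<s} \<longrightarrow> f x = 0}"
      by (auto simp: points_def not_less)
    then show ?thesis using card_supp_funs[of "{..<s}", where 'b='a] by simp
  qed
  have mind: "mindices s m = {i \<in> expvecs s. wt s i \<le> m - 1}"
    using assms(1) by (auto simp: mindices_def)
  have P2: "card (alphabet s m :: ((nat \<Rightarrow> nat) \<Rightarrow> 'a) set) = ?q ^ ((s + m - 1) choose s)"
  proof -
    have "alphabet s m = {f :: (nat \<Rightarrow> nat) \<Rightarrow> 'a. \<forall>x. x \<notin> mindices s m \<longrightarrow> f x = 0}"
      by (simp add: alphabet_def)
    moreover have "finite (mindices s m)" "card (mindices s m) = (s + m - 1) choose s"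
      using card_wt_le[of s "m - 1"] assms(1) by (simp_all add: mind add.commute)
    ultimately show ?thesis by (simp add: card_supp_funs)
  qed
  have P3: "mult_code m d s \<subseteq> (points s :: (nat \<Rightarrow> 'a) set) \<rightarrow> alphabet s m"
    by (auto simp: mult_code_def mult_codeword_def mult_symbol_def alphabet_def)
  have inj: "inj_on (mult_codeword s m d :: _ \<Rightarrow> (nat \<Rightarrow> 'a) \<Rightarrow> _) (polys s d)"
  proof (rule inj_onI)
    fix P P' :: "(nat \<Rightarrow> nat) \<Rightarrow> 'a"
    assume P: "P \<in> polys s d" and P': "P' \<in> polys s d"
      and eq: "mult_codeword s m d P = mult_codeword s m d P'"
    have "\<forall>w\<in>(points s :: (nat \<Rightarrow> 'a) set). \<forall>i\<in>mindices s m. hasse s d (\<lambda>e. P e - P' e) i w = 0"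
    proof (intro ballI)
      fix w :: "nat \<Rightarrow> 'a" and i assume w: "w \<in> points s" and i: "i \<in> mindices s m"
      have "hasse s d P i w = hasse s d P' i w"
        by (rule codeword_eq_at[OF w _ i]) (simp add: eq)
      then show "hasse s d (\<lambda>e. P e - P' e) i w = 0" by (simp add: hasse_diff)
    qed
    then have "(\<lambda>e. P e - P' e) = (\<lambda>_. 0)" by (rule inj_aux[OF polys_diff[OF P P'] dmq])
    then show "P = P'" by (simp add: fun_eq_iff)
  qed
  have cpolys: "card (polys s d :: ((nat \<Rightarrow> nat) \<Rightarrow> 'a) set) = ?q ^ ((d + s) choose s)"
  proof -
    have "polys s d = {f :: (nat \<Rightarrow> nat) \<Rightarrow> 'a. \<forall>x. x \<notin> monoms s d \<longrightarrow> f x = 0}"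
      by (auto simp: polys_def)
    moreover have "card (monoms s d) = (d + s) choose s"
      using card_wt_le[of s d] by (simp add: monoms_def)
    ultimately show ?thesis by (simp add: card_supp_funs finite_monoms)
  qed
  have ccode: "card (mult_code m d s :: ((nat \<Rightarrow> 'a) \<Rightarrow> ((nat \<Rightarrow> nat) \<Rightarrow> 'a)) set) = ?q ^ ((d + s) choose s)"
    unfolding mult_code_def using card_image[OF inj] cpolys by simp
  have P4: "real (card (mult_code m d s :: ((nat \<Rightarrow> 'a) \<Rightarrow> ((nat \<Rightarrow> nat) \<Rightarrow> 'a)) set))
        = real (?q ^ ((s + m - 1) choose s)) powr (real ((d + s) choose s) / real ((s + m - 1) choose s))"
  proof -
    define B where "B = (s + m - 1) choose s"
    define N where "N = (d + s) choose s"
    have Bpos: "B > 0" unfolding B_def using assms(1) by (simp add: zero_less_binomial_iff)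
    have rq: "real ?q > 0" using qpos by simp
    have "real (?q ^ B) powr (real N / real B) = (real ?q powr real B) powr (real N / real B)"
      using rq by (simp add: powr_realpow)
    also have "\<dots> = real ?q powr (real B * (real N / real B))" by (simp add: powr_powr)
    also have "\<dots> = real ?q powr real N" using Bpos by simp
    also have "\<dots> = real (?q ^ N)" using rq by (simp add: powr_realpow)
    finally show ?thesis using ccode by (simp add: B_def N_def)
  qed
  have P5: "is_batch_code (mult_code m d s :: ((nat \<Rightarrow> 'a) \<Rightarrow> ((nat \<Rightarrow> nat) \<Rightarrow> 'a)) set) (points s) k"
    unfolding is_batch_code_def
  proof (intro allI impI)
    fix xs :: "(nat \<Rightarrow> 'a) list"
    assume xs: "length xs = k \<and> set xs \<subseteq> points s"
    have xlen: "length xs = k" and xset: "set xs \<subseteq> points s" using xs by auto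
    have xsp: "\<forall>j<k. xs ! j \<in> points s"
    proof (intro allI impI)
      fix j assume "j < k"
      then have "xs ! j \<in> set xs" using xlen by simp
      then show "xs ! j \<in> points s" using xset by (rule subsetD[rotated])
    qed
    show "\<exists>R :: nat \<Rightarrow> (nat \<Rightarrow> 'a) set. \<exists>g :: nat \<Rightarrow> ((nat \<Rightarrow> 'a) \<Rightarrow> ((nat \<Rightarrow> nat) \<Rightarrow> 'a)) \<Rightarrow> ((nat \<Rightarrow> nat) \<Rightarrow> 'a).
           (\<forall>j<k. R j \<subseteq> points s) \<and>
           (\<forall>j<k. \<forall>j'<k. j \<noteq> j' \<longrightarrow> R j \<inter> R j' = {}) \<and>
           (\<forall>j<k. \<forall>c\<in>mult_code m d s. c (xs ! j) = g j (restrict c (R j)))"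
    proof (cases "s = 1")
      case True
      then have k1: "k = 1" using assms(4,6) by simp
      define R where "R = (\<lambda>j. {xs ! j})"
      have r1: "\<forall>j<k. R j \<subseteq> points s" using xsp by (simp add: R_def)
      have r2: "\<forall>j<k. \<forall>j'<k. j \<noteq> j' \<longrightarrow> R j \<inter> R j' = {}" using k1 by simp
      have r3: "\<forall>j<k. \<forall>P\<in>polys s d. (\<forall>u\<in>R j. \<forall>i\<in>mindices s m. hasse s d P i u = 0)
          \<longrightarrow> (\<forall>i\<in>mindices s m. hasse s d P i (xs ! j) = 0)" by (simp add: R_def)
      show ?thesis by (rule batch_det[OF r1 r2 r3 xsp])
    next
      case False
      then have s2: "2 \<le> s" using assms(2) by simp
      have "int k * int m ^ (s - 1) \<le> int ?q" using X1 unfolding X_def by simp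
      then have kK: "k * m ^ (s - 1) \<le> ?q" by (metis of_nat_le_iff of_nat_mult of_nat_power)
      obtain A :: "nat \<Rightarrow> 'a set" where
        cA: "\<forall>j<k. card (A j) = m ^ (s - 1)" and dA: "\<forall>j<k. \<forall>j'<k. j \<noteq> j' \<longrightarrow> A j \<inter> A j' = {}"
        using blocks[OF kK] by (elim exE conjE)
      from line_sets[OF s2 xlen xset assms(1) cA dA assms(5)]
      obtain R where r1: "\<forall>j<k. R j \<subseteq> points s" and r2: "\<forall>j<k. \<forall>j'<k. j \<noteq> j' \<longrightarrow> R j \<inter> R j' = {}"
        and r3: "\<forall>j<k. \<forall>P\<in>polys s d. (\<forall>u\<in>R j. \<forall>i\<in>mindices s m. hasse s d P i u = 0)
          \<longrightarrow> (\<forall>i\<in>mindices s m. hasse s d P i (xs ! j) = 0)"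
        by (elim exE conjE)
      show ?thesis by (rule batch_det[OF r1 r2 r3 xsp])
    qed
  qed
  show ?thesis by (intro conjI P1 P2 P3 P4 P5)
qed

end
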